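(* Let $K$ be an $N$-vertex $q$-edge-colored ordered complete graph. Then there is a $q$-edge-colored ordered complete graph $\widetilde K$ on $N^q$ vertices such that $\ell_i(\widetilde K)=\Pi(K)$ for all $i\in[q]$.
   Context: An ordered complete graph is a complete graph with a linear order on its vertices; colors are from $[q]$. A path $v_1,\dots,v_L$ is monotone if $v_1<\dots<v_L$; its length is its number of vertices. For a color $i\in[q]$, $\ell_i(K)$ is the length of the longest monotone path in $K$ none of whose edges has color $i$, and $\Pi(K)=\prod_{i=1}^q\ell_i(K)$. *)

theory Defs
  imports Main
begin

text \<open>An N-vertex ordered complete graph has vertex set {0..<N} with the natural order.
  A q-edge-colouring assigns to every edge {u,v} with u < v a colour c u v in {1..q};
  values of c for other arguments are irrelevant.\<close>

definition colouring :: "nat \<Rightarrow> nat \<Rightarrow> (nat \<Rightarrow> nat \<Rightarrow> nat) \<Rightarrow> bool" where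
  "colouring N q c \<longleftrightarrow> (\<forall>u v. u < v \<and> v < N \<longrightarrow> c u v \<in> {1..q})"

text \<open>Monotone path: strictly increasing list of vertices; its length is its number of vertices.\<close>
definition monotone_path :: "nat \<Rightarrow> nat list \<Rightarrow> bool" where
  "monotone_path N vs \<longleftrightarrow> sorted_wrt (<) vs \<and> set vs \<subseteq> {..<N}"

definition avoids_colour :: "(nat \<Rightarrow> nat \<Rightarrow> nat) \<Rightarrow> nat \<Rightarrow> nat list \<Rightarrow> bool" where
  "avoids_colour c i vs \<longleftrightarrow> (\<forall>j. Suc j < length vs \<longrightarrow> c (vs ! j) (vs ! Suc j) \<noteq> i)"

definition ell :: "nat \<Rightarrow> (nat \<Rightarrow> nat \<Rightarrow> nat) \<Rightarrow> nat \<Rightarrow> nat" where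
  "ell N c i = Max {length vs | vs. monotone_path N vs \<and> avoids_colour c i vs}"

definition Pi_ell :: "nat \<Rightarrow> nat \<Rightarrow> (nat \<Rightarrow> nat \<Rightarrow> nat) \<Rightarrow> nat" where
  "Pi_ell N q c = (\<Prod>i\<in>{1..q}. ell N c i)"

end

theory Submission
  imports Defs
begin

lemma mp_length: "monotone_path N vs \<Longrightarrow> length vs \<le> N"
proof -
  assume a: "monotone_path N vs"
  then have d: "distinct vs" and s: "set vs \<subseteq> {..<N}"
    by (auto simp: monotone_path_def strict_sorted_iff)
  have "length vs = card (set vs)" using d by (simp add: distinct_card)
  also have "\<dots> \<le> card {..<N}" using s by (intro card_mono) auto
  finally show ?thesis by simp
qed

lemma paths_finite: "finite {vs. monotone_path N vs \<and> P vs}"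
proof (rule finite_subset)
  show "{vs. monotone_path N vs \<and> P vs} \<subseteq> {vs. set vs \<subseteq> {..<N} \<and> length vs \<le> N}"
    using mp_length by (auto simp: monotone_path_def)
  show "finite {vs. set vs \<subseteq> {..<N} \<and> length vs \<le> N}"
    by (rule finite_lists_length_le) auto
qed

lemma ell_alt: "ell N c i = Max (length ` {vs. monotone_path N vs \<and> avoids_colour c i vs})"
  unfolding ell_def by (rule arg_cong[where f=Max]) blast

lemma nil_path: "monotone_path N []" "avoids_colour c i []"
  by (auto simp: monotone_path_def avoids_colour_def)

lemma single_path: "u < N \<Longrightarrow> monotone_path N [u]" "avoids_colour c i [u]"
  by (auto simp: monotone_path_def avoids_colour_def)

lemma ell_ge: "monotone_path N vs \<Longrightarrow> avoids_colour c i vs \<Longrightarrow> length vs \<le> ell N c i"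
  unfolding ell_alt by (rule Max_ge) (auto intro: finite_imageI paths_finite)

lemma ell_ex: "\<exists>vs. monotone_path N vs \<and> avoids_colour c i vs \<and> length vs = ell N c i"
proof -
  have "ell N c i \<in> length ` {vs. monotone_path N vs \<and> avoids_colour c i vs}"
    unfolding ell_alt by (rule Max_in) (use nil_path in \<open>auto intro: finite_imageI paths_finite\<close>)
  then show ?thesis by auto
qed

lemma avoids_Cons2: "avoids_colour c i (x # y # r) \<longleftrightarrow> c x y \<noteq> i \<and> avoids_colour c i (y # r)"
  unfolding avoids_colour_def
  apply (rule iffI)
   apply (intro conjI allI impI)
    apply (drule spec[of _ 0], simp)
   subgoal for j by (drule spec[of _ "Suc j"]) simp
  apply clarify
  subgoal for j by (cases j) auto
  done

lemma avoids_append: "xs \<noteq> [] \<Longrightarrow> ys \<noteq> [] \<Longrightarrow>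
  avoids_colour c i (xs @ ys) \<longleftrightarrow> avoids_colour c i xs \<and> avoids_colour c i ys \<and> c (last xs) (hd ys) \<noteq> i"
proof (induction xs)
  case Nil then show ?case by simp
next
  case (Cons x xs)
  show ?case
  proof (cases xs)
    case Nil
    then show ?thesis using Cons.prems by (cases ys) (auto simp: avoids_Cons2 single_path)
  next
    case (Cons y r)
    then show ?thesis using Cons.IH Cons.prems by (auto simp: avoids_Cons2)
  qed
qed

definition prodc :: "nat \<Rightarrow> (nat \<Rightarrow> nat \<Rightarrow> nat) \<Rightarrow> (nat \<Rightarrow> nat \<Rightarrow> nat) \<Rightarrow> nat \<Rightarrow> nat \<Rightarrow> nat" where
  "prodc b cA cB x y = (if x div b = y div b then cB (x mod b) (y mod b) else cA (x div b) (y div b))"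

definition gam :: "nat \<Rightarrow> (nat \<Rightarrow> nat \<Rightarrow> nat) \<Rightarrow> nat \<Rightarrow> nat \<Rightarrow> nat" where
  "gam N c i u = Max (length ` {vs. monotone_path N vs \<and> avoids_colour c i vs \<and> vs \<noteq> [] \<and> hd vs = u})"

lemma gam_fin: "finite (length ` {vs. monotone_path N vs \<and> avoids_colour c i vs \<and> vs \<noteq> [] \<and> hd vs = u})"
  by (intro finite_imageI) (rule paths_finite)

lemma gam_path: "monotone_path N (u # r) \<Longrightarrow> avoids_colour c i (u # r) \<Longrightarrow> length (u # r) \<le> gam N c i u"
  unfolding gam_def by (rule Max_ge[OF gam_fin]) force

lemma gam_ge1: "u < N \<Longrightarrow> 1 \<le> gam N c i u"
  using gam_path[of N u "[]"] single_path by force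

lemma gam_ex: "u < N \<Longrightarrow> \<exists>r. monotone_path N (u # r) \<and> avoids_colour c i (u # r) \<and> length (u # r) = gam N c i u"
proof -
  assume "u < N"
  then have "[u] \<in> {vs. monotone_path N vs \<and> avoids_colour c i vs \<and> vs \<noteq> [] \<and> hd vs = u}"
    using single_path by auto
  then have "gam N c i u \<in> length ` {vs. monotone_path N vs \<and> avoids_colour c i vs \<and> vs \<noteq> [] \<and> hd vs = u}"
    unfolding gam_def by (intro Max_in gam_fin) blast
  then obtain vs where "monotone_path N vs" "avoids_colour c i vs" "vs \<noteq> []" "hd vs = u" "length vs = gam N c i u"
    by auto
  then show ?thesis by (cases vs) auto
qed

lemma gam_le_ell: "u < N \<Longrightarrow> gam N c i u \<le> ell N c i"
  using gam_ex[of u N c i] ell_ge by metis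

lemma gam_step: "u < v \<Longrightarrow> v < N \<Longrightarrow> c u v \<noteq> i \<Longrightarrow> gam N c i v + 1 \<le> gam N c i u"
proof -
  assume a: "u < v" "v < N" "c u v \<noteq> i"
  obtain r where r: "monotone_path N (v # r)" "avoids_colour c i (v # r)" "length (v # r) = gam N c i v"
    using gam_ex[OF a(2)] by blast
  have "monotone_path N (u # v # r)" using r(1) a by (auto simp: monotone_path_def)
  moreover have "avoids_colour c i (u # v # r)" using r(2) a by (simp add: avoids_Cons2)
  ultimately have "length (u # v # r) \<le> gam N c i u" by (rule gam_path)
  then show ?thesis using r(3) by simp
qed

lemma div_mod_lt: "(u::nat) < v \<Longrightarrow> u div b = v div b \<Longrightarrow> u mod b < v mod b"
  by (metis add_less_cancel_left div_mult_mod_eq)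

lemma up_bound:
  assumes "0 < b"
  shows "monotone_path (a*b) (x#P) \<Longrightarrow> avoids_colour (prodc b cA cB) i (x#P) \<Longrightarrow>
    length (x#P) \<le> (gam a cA i (x div b) - 1) * ell b cB i + gam b cB i (x mod b)"
proof (induction P arbitrary: x)
  case Nil
  have "1 \<le> gam b cB i (x mod b)" using assms by (intro gam_ge1) simp
  then show ?case by simp
next
  case (Cons y P)
  have xy: "x < y" "y < a * b" using Cons.prems(1) by (auto simp: monotone_path_def)
  have p2: "monotone_path (a*b) (y#P)" using Cons.prems(1) by (auto simp: monotone_path_def)
  have col: "prodc b cA cB x y \<noteq> i" and a2: "avoids_colour (prodc b cA cB) i (y#P)"
    using Cons.prems(2) by (auto simp: avoids_Cons2)
  have IH: "length (y#P) \<le> (gam a cA i (y div b) - 1) * ell b cB i + gam b cB i (y mod b)"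
    using Cons.IH[OF p2 a2] .
  have yd: "y div b < a" using xy(2) assms by (simp add: div_less_iff_less_mult mult.commute)
  have ym: "y mod b < b" "x mod b < b" using assms by auto
  show ?case
  proof (cases "x div b = y div b")
    case True
    then have "cB (x mod b) (y mod b) \<noteq> i" using col by (simp add: prodc_def)
    then have "gam b cB i (y mod b) + 1 \<le> gam b cB i (x mod b)"
      using div_mod_lt[OF xy(1) True] ym by (intro gam_step) auto
    then show ?thesis using IH True by simp
  next
    case False
    have lt: "x div b < y div b" using False xy(1) div_le_mono[of x y b] by simp
    then have "cA (x div b) (y div b) \<noteq> i" using col False by (simp add: prodc_def)
    then have g1: "gam a cA i (y div b) + 1 \<le> gam a cA i (x div b)"
      using lt yd by (intro gam_step) auto
    have g2: "1 \<le> gam a cA i (y div b)" using yd by (rule gam_ge1)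
    have g3: "gam b cB i (y mod b) \<le> ell b cB i" using ym by (intro gam_le_ell)
    have g4: "1 \<le> gam b cB i (x mod b)" using ym by (intro gam_ge1)
    define G where "G = gam a cA i (y div b)"
    define G' where "G' = gam a cA i (x div b)"
    define L where "L = ell b cB i"
    have "(G - 1) * L + L = G * L" using g2[folded G_def] by (cases G) auto
    moreover have "G * L \<le> (G' - 1) * L" using g1 unfolding G_def G'_def by (intro mult_le_mono1) simp
    ultimately have key: "(G - 1) * L + L \<le> (G' - 1) * L" by simp
    have "length (x#y#P) = length (y#P) + 1" by simp
    also have "\<dots> \<le> (G - 1) * L + gam b cB i (y mod b) + 1" using IH unfolding G_def L_def by simp
    also have "\<dots> \<le> (G - 1) * L + L + gam b cB i (x mod b)" using g3 g4 unfolding L_def by simp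
    also have "\<dots> \<le> (G' - 1) * L + gam b cB i (x mod b)" using key by simp
    finally show ?thesis unfolding G'_def L_def .
  qed
qed

lemma ell_prod_le:
  assumes "0 < b"
  shows "ell (a*b) (prodc b cA cB) i \<le> ell a cA i * ell b cB i"
proof -
  obtain vs where vs: "monotone_path (a*b) vs" "avoids_colour (prodc b cA cB) i vs"
    "length vs = ell (a*b) (prodc b cA cB) i" using ell_ex by blast
  show ?thesis
  proof (cases vs)
    case Nil then show ?thesis using vs by simp
  next
    case (Cons x P)
    have x: "x < a * b" using vs(1) Cons by (auto simp: monotone_path_def)
    have xd: "x div b < a" using x assms by (simp add: div_less_iff_less_mult mult.commute)
    have xm: "x mod b < b" using assms by simp
    have "length vs \<le> (gam a cA i (x div b) - 1) * ell b cB i + gam b cB i (x mod b)"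
      using up_bound[OF assms] vs Cons by blast
    also have "\<dots> \<le> (ell a cA i - 1) * ell b cB i + ell b cB i"
      using gam_le_ell[OF xd, of cA i] gam_le_ell[OF xm, of cB i] by (intro add_mono mult_le_mono1 diff_le_mono) auto
    also have "\<dots> = ell a cA i * ell b cB i"
      using gam_ge1[OF xd, of cA i] gam_le_ell[OF xd, of cA i] by (cases "ell a cA i") auto
    finally show ?thesis using vs by simp
  qed
qed

definition blk :: "nat \<Rightarrow> nat list \<Rightarrow> nat \<Rightarrow> nat list" where
  "blk b pB v = map (\<lambda>w. v * b + w) pB"

lemma blk_div: "w < b \<Longrightarrow> (v * b + w) div b = v" "w < (b::nat) \<Longrightarrow> (v * b + w) mod b = w"
  by auto

lemma blk_path:
  assumes "v < a" "monotone_path b pB" "avoids_colour cB i pB"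
  shows "monotone_path (a*b) (blk b pB v)" "avoids_colour (prodc b cA cB) i (blk b pB v)"
proof -
  have lt: "w \<in> set pB \<Longrightarrow> w < b" for w using assms(2) by (auto simp: monotone_path_def)
  have "v * b + w < a * b" if "w < b" for w
  proof -
    have "v * b + w < (v+1) * b" using that by simp
    also have "\<dots> \<le> a * b" using assms(1) by (intro mult_le_mono1) simp
    finally show ?thesis .
  qed
  then show "monotone_path (a*b) (blk b pB v)" using assms(2) lt
    by (auto simp: monotone_path_def blk_def sorted_wrt_map elim!: sorted_wrt_mono_rel[rotated])
  show "avoids_colour (prodc b cA cB) i (blk b pB v)"
    unfolding avoids_colour_def blk_def
  proof (intro allI impI)
    fix j assume j: "Suc j < length (map (\<lambda>w. v * b + w) pB)"
    then have m: "pB ! j < b" "pB ! Suc j < b" using lt by auto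
    have "cB (pB ! j) (pB ! Suc j) \<noteq> i" using assms(3) j by (auto simp: avoids_colour_def)
    then show "prodc b cA cB (map (\<lambda>w. v * b + w) pB ! j) (map (\<lambda>w. v * b + w) pB ! Suc j) \<noteq> i"
      using j m by (simp add: prodc_def blk_div)
  qed
qed

lemma low_path:
  assumes b: "0 < b" and B: "monotone_path b pB" "avoids_colour cB i pB" "pB \<noteq> []"
  shows "monotone_path a pA \<Longrightarrow> avoids_colour cA i pA \<Longrightarrow>
    monotone_path (a*b) (concat (map (blk b pB) pA)) \<and> avoids_colour (prodc b cA cB) i (concat (map (blk b pB) pA))
    \<and> length (concat (map (blk b pB) pA)) = length pA * length pB
    \<and> (pA \<noteq> [] \<longrightarrow> hd (concat (map (blk b pB) pA)) = hd pA * b + hd pB)"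
proof (induction pA)
  case Nil then show ?case by (simp add: nil_path)
next
  case (Cons v r)
  have lt: "w \<in> set pB \<Longrightarrow> w < b" for w using B(1) by (auto simp: monotone_path_def)
  have v: "v < a" and vr: "\<forall>v'\<in>set r. v < v'" and mr: "monotone_path a r"
    using Cons.prems(1) by (auto simp: monotone_path_def)
  have ar: "avoids_colour cA i r" using Cons.prems(2) by (cases r) (auto simp: avoids_Cons2 nil_path)
  note IH = Cons.IH[OF mr ar]
  note bp = blk_path[OF v B(1,2)]
  let ?R = "concat (map (blk b pB) r)"
  have len: "length (blk b pB v) = length pB" by (simp add: blk_def)
  have cross: "\<forall>x\<in>set (blk b pB v). \<forall>y\<in>set ?R. x < y"
  proof (intro ballI)
    fix x y assume x: "x \<in> set (blk b pB v)" and y: "y \<in> set ?R"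
    obtain w where w: "w \<in> set pB" "x = v * b + w" using x by (auto simp: blk_def)
    obtain v' w' where w': "v' \<in> set r" "y = v' * b + w'" using y by (auto simp: blk_def)
    have "x < (v + 1) * b" using w lt by simp
    also have "\<dots> \<le> v' * b" using vr w'(1) by (intro mult_le_mono1) (simp add: Suc_le_eq)
    also have "\<dots> \<le> y" using w' by simp
    finally show "x < y" .
  qed
  show ?case
  proof (cases r)
    case Nil
    then show ?thesis using bp len B(3) by (auto simp: blk_def hd_map)
  next
    case (Cons v' r')
    have Rne: "?R \<noteq> []" using Cons B(3) by (simp add: blk_def)
    have Bne: "blk b pB v \<noteq> []" using B(3) by (simp add: blk_def)
    have hdR: "hd ?R = v' * b + hd pB" using IH Cons by simp
    have lastB: "last (blk b pB v) = v * b + last pB" using B(3) by (simp add: blk_def last_map)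
    have vv': "v < v'" using vr Cons by simp
    have cA: "cA v v' \<noteq> i" using Cons.prems(2) Cons by (simp add: avoids_Cons2)
    have "prodc b cA cB (last (blk b pB v)) (hd ?R) = cA v v'"
      unfolding lastB hdR prodc_def using lt B(3) vv' by (simp add: blk_div)
    then have join: "prodc b cA cB (last (blk b pB v)) (hd ?R) \<noteq> i" using cA by simp
    have "monotone_path (a*b) (blk b pB v @ ?R)"
      using bp(1) IH cross by (auto simp: monotone_path_def sorted_wrt_append)
    moreover have "avoids_colour (prodc b cA cB) i (blk b pB v @ ?R)"
      using avoids_append[OF Bne Rne] bp(2) IH join by simp
    moreover have "hd (blk b pB v @ ?R) = v * b + hd pB" using B(3) Bne by (simp add: blk_def hd_map)
    ultimately show ?thesis using IH len by simp
  qed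
qed

lemma ell_pos: "0 < N \<Longrightarrow> 1 \<le> ell N c i"
  using ell_ge[OF single_path] by force

lemma ell_prod_ge:
  assumes "0 < b"
  shows "ell a cA i * ell b cB i \<le> ell (a*b) (prodc b cA cB) i"
proof -
  obtain pA where A: "monotone_path a pA" "avoids_colour cA i pA" "length pA = ell a cA i" using ell_ex by blast
  obtain pB where B: "monotone_path b pB" "avoids_colour cB i pB" "length pB = ell b cB i" using ell_ex by blast
  have "pB \<noteq> []" using B(3) ell_pos[OF assms, of cB i] by auto
  from low_path[OF assms B(1,2) this A(1,2)] have
    "monotone_path (a*b) (concat (map (blk b pB) pA))" "avoids_colour (prodc b cA cB) i (concat (map (blk b pB) pA))"
    "length (concat (map (blk b pB) pA)) = length pA * length pB" by auto
  then show ?thesis using ell_ge A(3) B(3) by metis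
qed

lemma ell_prod:
  assumes "0 < b"
  shows "ell (a*b) (prodc b cA cB) i = ell a cA i * ell b cB i"
  using ell_prod_le[OF assms] ell_prod_ge[OF assms] by (rule antisym)

fun itp :: "nat \<Rightarrow> (nat \<Rightarrow> nat \<Rightarrow> nat) list \<Rightarrow> nat \<Rightarrow> nat \<Rightarrow> nat" where
  "itp N [] = (\<lambda>u v. 1)"
| "itp N (c # cs) = prodc (N ^ length cs) c (itp N cs)"

lemma ell_one: "ell 1 c i = 1"
  using ell_pos[of 1 c i] ell_ex[of 1 c i] mp_length by (metis le_antisym zero_less_one)

lemma ell_itp: "0 < N \<Longrightarrow> ell (N ^ length cs) (itp N cs) i = prod_list (map (\<lambda>c. ell N c i) cs)"
proof (induction cs)
  case Nil then show ?case using ell_one[of "\<lambda>u v. 1" i] by simp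
next
  case (Cons c cs)
  have "ell (N ^ length (c # cs)) (itp N (c # cs)) i = ell (N * N ^ length cs) (prodc (N ^ length cs) c (itp N cs)) i"
    by simp
  also have "\<dots> = ell N c i * ell (N ^ length cs) (itp N cs) i" using Cons.prems by (intro ell_prod) simp
  finally show ?case using Cons by simp
qed

lemma colouring_prodc:
  assumes "0 < b" "colouring a q cA" "colouring b q cB"
  shows "colouring (a*b) q (prodc b cA cB)"
  unfolding colouring_def
proof (intro allI impI)
  fix u v assume uv: "u < v \<and> v < a * b"
  show "prodc b cA cB u v \<in> {1..q}"
  proof (cases "u div b = v div b")
    case True
    then show ?thesis using div_mod_lt[of u v b] uv assms(1,3) by (simp add: prodc_def colouring_def)
  next
    case False
    have "u div b < v div b" using False uv div_le_mono[of u v b] by simp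
    moreover have "v div b < a" using uv assms(1) by (simp add: div_less_iff_less_mult mult.commute)
    ultimately show ?thesis using False assms(2) by (simp add: prodc_def colouring_def)
  qed
qed

lemma colouring_itp: "0 < N \<Longrightarrow> 1 \<le> q \<Longrightarrow> (\<forall>c\<in>set cs. colouring N q c) \<Longrightarrow> colouring (N ^ length cs) q (itp N cs)"
proof (induction cs)
  case Nil then show ?case by (simp add: colouring_def)
next
  case (Cons c cs)
  then show ?case using colouring_prodc[of "N ^ length cs" N q c "itp N cs"] by simp
qed

lemma ell_perm:
  assumes "colouring N q c" "inj_on f {1..q}" "m \<in> {1..q}"
  shows "ell N (\<lambda>u v. f (c u v)) (f m) = ell N c m"
proof -
  have "avoids_colour (\<lambda>u v. f (c u v)) (f m) vs = avoids_colour c m vs" if mp: "monotone_path N vs" for vs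
  proof -
    have "f (c (vs ! j) (vs ! Suc j)) = f m \<longleftrightarrow> c (vs ! j) (vs ! Suc j) = m" if j: "Suc j < length vs" for j
    proof -
      have "vs ! j < vs ! Suc j" using mp j by (auto simp: monotone_path_def sorted_wrt_nth_less)
      moreover have "vs ! Suc j \<in> set vs" using j by (intro nth_mem) simp
      then have "vs ! Suc j < N" using mp by (auto simp: monotone_path_def)
      ultimately have "c (vs ! j) (vs ! Suc j) \<in> {1..q}" using assms(1) by (auto simp: colouring_def)
      then show ?thesis using assms(2,3) by (meson inj_on_eq_iff)
    qed
    then show ?thesis unfolding avoids_colour_def by blast
  qed
  then show ?thesis unfolding ell_def by metis
qed

definition pi :: "nat \<Rightarrow> nat \<Rightarrow> nat \<Rightarrow> nat" where
  "pi q k m = (m + k) mod q + 1"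

lemma mod_eq_close: "(x::nat) \<le> y \<Longrightarrow> y < x + q \<Longrightarrow> (x + k) mod q = (y + k) mod q \<Longrightarrow> x = y"
proof -
  assume a: "x \<le> y" "y < x + q" "(x + k) mod q = (y + k) mod q"
  then have "q dvd (y + k) - (x + k)" using mod_eq_dvd_iff_nat[of "x+k" "y+k" q] by simp
  then have "q dvd y - x" by simp
  moreover have "y - x < q" using a by simp
  ultimately show "x = y" using a(1) nat_dvd_not_less[of "y - x" q] by (cases "y - x = 0") auto
qed

lemma pi_inj: "inj_on (pi q k) {1..q}"
proof (rule inj_onI)
  fix x y assume xy: "x \<in> {1..q}" "y \<in> {1..q}" "pi q k x = pi q k y"
  then have e: "(x + k) mod q = (y + k) mod q" by (simp add: pi_def)
  show "x = y"
  proof (cases "x \<le> y")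
    case True then show ?thesis using mod_eq_close[OF True _ e] xy by auto
  next
    case False then show ?thesis using mod_eq_close[of y x q k] e xy by auto
  qed
qed

lemma pi_range: "1 \<le> q \<Longrightarrow> pi q k ` {1..q} = {1..q}"
  apply (rule endo_inj_surj)
    apply simp
   apply (auto simp: pi_def Suc_le_eq)[1]
  apply (rule pi_inj)
  done

lemma ell_zero: "ell 0 c i = 0"
  using ell_ex[of 0 c i] mp_length by fastforce

theorem proposition3p7:
  fixes N q :: nat and c :: "nat \<Rightarrow> nat \<Rightarrow> nat"
  assumes "colouring N q c"
  shows "\<exists>c'. colouring (N ^ q) q c' \<and> (\<forall>i\<in>{1..q}. ell (N ^ q) c' i = Pi_ell N q c)"
proof (cases "q = 0")
  case True
  then show ?thesis by (intro exI[of _ "\<lambda>u v. 1"]) (simp add: colouring_def)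
next
  case qF: False
  then have q1: "1 \<le> q" by simp
  show ?thesis
  proof (cases "N = 0")
    case True
    have "Pi_ell N q c = 0" unfolding Pi_ell_def True ell_zero using q1 by simp
    then show ?thesis using True qF by (intro exI[of _ "\<lambda>u v. 1"]) (simp add: colouring_def ell_zero power_0_left)
  next
    case False
    then have N0: "0 < N" by simp
    define cs where "cs = map (\<lambda>k u v. pi q k (c u v)) [0..<q]"
    have lcs: "length cs = q" by (simp add: cs_def)
    have colcs: "\<forall>c\<in>set cs. colouring N q c"
      using q1 by (auto simp: cs_def colouring_def pi_def Suc_le_eq)
    have col: "colouring (N ^ q) q (itp N cs)" using colouring_itp[OF N0 q1 colcs] lcs by simp
    have "ell (N ^ q) (itp N cs) i = Pi_ell N q c" if i: "i \<in> {1..q}" for i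
    proof -
      have "\<exists>m\<in>{1..q}. pi q k m = i" for k using pi_range[OF q1, of k] i by (metis imageE)
      then obtain h where h: "\<And>k. h k \<in> {1..q}" "\<And>k. pi q k (h k) = i" by metis
      have hinj: "inj_on h {0..<q}"
      proof (rule inj_onI)
        fix k1 k2 assume k: "k1 \<in> {0..<q}" "k2 \<in> {0..<q}" "h k1 = h k2"
        then have e: "(k1 + h k1) mod q = (k2 + h k1) mod q"
          using h(2)[of k1] h(2)[of k2] by (simp add: pi_def add.commute)
        show "k1 = k2"
        proof (cases "k1 \<le> k2")
          case True then show ?thesis using mod_eq_close[OF True _ e] k by auto
        next
          case False then show ?thesis using mod_eq_close[of k2 k1 q "h k1"] e[symmetric] k by auto
        qed
      qed
      have himg: "h ` {0..<q} = {1..q}"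
        by (rule card_subset_eq) (use h(1) card_image[OF hinj] in auto)
      have "ell (N ^ q) (itp N cs) i = prod_list (map (\<lambda>c. ell N c i) cs)"
        using ell_itp[OF N0, of cs i] lcs by simp
      also have "\<dots> = (\<Prod>k\<in>{0..<q}. ell N (\<lambda>u v. pi q k (c u v)) i)"
        unfolding cs_def by (simp add: prod.distinct_set_conv_list[symmetric] comp_def)
      also have "\<dots> = (\<Prod>k\<in>{0..<q}. ell N c (h k))"
      proof (rule prod.cong[OF refl])
        fix k
        have "ell N (\<lambda>u v. pi q k (c u v)) (pi q k (h k)) = ell N c (h k)"
          by (rule ell_perm[OF assms pi_inj h(1)])
        then show "ell N (\<lambda>u v. pi q k (c u v)) i = ell N c (h k)" using h(2) by simp
      qed
      also have "\<dots> = (\<Prod>m\<in>h ` {0..<q}. ell N c m)"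
        using prod.reindex[OF hinj, of "\<lambda>m. ell N c m"] by simp
      also have "\<dots> = Pi_ell N q c" unfolding himg Pi_ell_def ..
      finally show ?thesis .
    qed
    then show ?thesis using col by blast
  qed
qed

end
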